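(* Let $x\in(0,\infty)$. The unique default ABMN solution with central ratio $\frac{n_{-1}-n_0}{m_0-m_{-1}}=x$ is $\{(a^{\rm def}_i(x),b^{\rm def}_i(x),m^{\rm def}_i(x),n^{\rm def}_i(x)):i\in\mathbb{Z}\}$, where: $m^{\rm def}(x)$ is the increasing sequence with $\lim_{i\to-\infty}m^{\rm def}_i(x)=0$ and $m^{\rm def}_{k+1}(x)-m^{\rm def}_k(x)=\prod_{i=0}^k(c_i(x)-1)$ for $k\in\mathbb{Z}$; $n^{\rm def}(x)$ is the decreasing sequence with $\lim_{i\to\infty}n^{\rm def}_i(x)=0$ and $n^{\rm def}_k(x)-n^{\rm def}_{k+1}(x)=x\prod_{i=0}^k(d_i(x)-1)$ for $k\in\mathbb{Z}$; and, with $M_i=m^{\rm def}_{i+1}(x)-m^{\rm def}_{i-1}(x)$, $N_i=n^{\rm def}_{i-1}(x)-n^{\rm def}_{i+1}(x)$, $a^{\rm def}_i(x)=\frac{M_i^2N_i}{(M_i+N_i)^2}$ and $b^{\rm def}_i(x)=\frac{M_iN_i^2}{(M_i+N_i)^2}$.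
   Context: ABMN system on $\mathbb{Z}$: real variables $a_i,b_i\ge0$, $m_i,n_i$ with, for all $i$, $(a_i+b_i)(m_i+a_i)=a_im_{i+1}+b_im_{i-1}$, $(a_i+b_i)(n_i+b_i)=a_in_{i+1}+b_in_{i-1}$, $(a_i+b_i)^2=b_i(m_{i+1}-m_{i-1})$, $(a_i+b_i)^2=a_i(n_{i-1}-n_{i+1})$. A solution is positive if all $a_i,b_i>0$; default if positive with $\lim_{i\to-\infty}m_i=0$, $\lim_{i\to\infty}n_i=0$, $m_0-m_{-1}=1$. Functions: for $x>0$ let $\omega=\sqrt{8x+1}$, $c(x)=\frac{(\omega+3)^2}{16}$, $d(x)=\frac{(\omega+3)^2}{8(\omega+1)}$, $s(x)=\frac{(\omega-1)^2}{4(\omega+7)}$. Let $s_{-1}(x)=1/s(1/x)$, $s_0(x)=x$, and for $i\in\mathbb{N}_+$, $s_i=s\circ s_{i-1}$, $s_{-i}=s_{-1}\circ s_{-(i-1)}$. Set $c_j=c\circ s_j$, $d_j=d\circ s_j$ for $j\in\mathbb{Z}$. Product convention: $\prod_{i=0}^k h_i=h_0\cdots h_k$ for $k\ge0$, $=1$ for $k=-1$, and $=h_{k+1}^{-1}\cdots h_{-1}^{-1}$ for $k\le-2$. *)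

theory Defs
  imports Complex_Main
begin

definition ABMN_solution :: "(int \<Rightarrow> real) \<Rightarrow> (int \<Rightarrow> real) \<Rightarrow> (int \<Rightarrow> real) \<Rightarrow> (int \<Rightarrow> real) \<Rightarrow> bool" where
  "ABMN_solution a b m n \<longleftrightarrow> (\<forall>i::int.
     a i \<ge> 0 \<and> b i \<ge> 0 \<and>
     (a i + b i) * (m i + a i) = a i * m (i+1) + b i * m (i-1) \<and>
     (a i + b i) * (n i + b i) = a i * n (i+1) + b i * n (i-1) \<and>
     (a i + b i)^2 = b i * (m (i+1) - m (i-1)) \<and>
     (a i + b i)^2 = a i * (n (i-1) - n (i+1)))"

definition ABMN_positive :: "(int \<Rightarrow> real) \<Rightarrow> (int \<Rightarrow> real) \<Rightarrow> (int \<Rightarrow> real) \<Rightarrow> (int \<Rightarrow> real) \<Rightarrow> bool" where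
  "ABMN_positive a b m n \<longleftrightarrow> ABMN_solution a b m n \<and> (\<forall>i. a i > 0 \<and> b i > 0)"

definition ABMN_default :: "(int \<Rightarrow> real) \<Rightarrow> (int \<Rightarrow> real) \<Rightarrow> (int \<Rightarrow> real) \<Rightarrow> (int \<Rightarrow> real) \<Rightarrow> bool" where
  "ABMN_default a b m n \<longleftrightarrow> ABMN_positive a b m n \<and>
     (m \<longlongrightarrow> 0) at_bot \<and> (n \<longlongrightarrow> 0) at_top \<and> m 0 - m (-1) = 1"

definition omg :: "real \<Rightarrow> real" where "omg x = sqrt (8*x + 1)"
definition cfun :: "real \<Rightarrow> real" where "cfun x = (omg x + 3)^2 / 16"
definition dfun :: "real \<Rightarrow> real" where "dfun x = (omg x + 3)^2 / (8 * (omg x + 1))"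
definition sfun :: "real \<Rightarrow> real" where "sfun x = (omg x - 1)^2 / (4 * (omg x + 7))"
definition sfun_m1 :: "real \<Rightarrow> real" where "sfun_m1 x = 1 / sfun (1 / x)"

definition s_iter :: "int \<Rightarrow> real \<Rightarrow> real" where
  "s_iter j = (if j \<ge> 0 then sfun ^^ nat j else sfun_m1 ^^ nat (- j))"

definition c_j :: "int \<Rightarrow> real \<Rightarrow> real" where "c_j j x = cfun (s_iter j x)"
definition d_j :: "int \<Rightarrow> real \<Rightarrow> real" where "d_j j x = dfun (s_iter j x)"

text \<open>Product convention: h_0...h_k for k >= 0, 1 for k = -1,
  and h_(k+1)^-1 ... h_(-1)^-1 for k <= -2.\<close>
definition gprod :: "(int \<Rightarrow> real) \<Rightarrow> int \<Rightarrow> real" where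
  "gprod h k = (if k \<ge> 0 then (\<Prod>i\<in>{0..k}. h i)
                else (\<Prod>i\<in>{k+1..-1}. inverse (h i)))"

definition is_def_solution :: "real \<Rightarrow> (int \<Rightarrow> real) \<Rightarrow> (int \<Rightarrow> real) \<Rightarrow> (int \<Rightarrow> real) \<Rightarrow> (int \<Rightarrow> real) \<Rightarrow> bool" where
  "is_def_solution x a b m n \<longleftrightarrow>
     mono m \<and> (m \<longlongrightarrow> 0) at_bot \<and>
     (\<forall>k. m (k+1) - m k = gprod (\<lambda>i. c_j i x - 1) k) \<and>
     antimono n \<and> (n \<longlongrightarrow> 0) at_top \<and>
     (\<forall>k. n k - n (k+1) = x * gprod (\<lambda>i. d_j i x - 1) k) \<and>
     (\<forall>i. a i = (m (i+1) - m (i-1))^2 * (n (i-1) - n (i+1))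
                 / ((m (i+1) - m (i-1)) + (n (i-1) - n (i+1)))^2) \<and>
     (\<forall>i. b i = (m (i+1) - m (i-1)) * (n (i-1) - n (i+1))^2
                 / ((m (i+1) - m (i-1)) + (n (i-1) - n (i+1)))^2)"

end

theory Submission
  imports Defs
begin


definition tt :: "real \<Rightarrow> real" where "tt y = (omg y - 1) / 4"

lemma omg_tt: "omg y = 4 * tt y + 1"
  unfolding tt_def by (simp add: field_simps)

lemma tt_pos: assumes "y > 0" shows "tt y > 0"
proof -
  have "sqrt (8*y+1) > sqrt 1" using assms by (subst real_sqrt_less_iff) simp
  thus ?thesis by (simp add: tt_def omg_def)
qed

lemma tt_eq: assumes "y > 0" shows "y = tt y * (1 + 2 * tt y)"
proof -
  have h: "(omg y)^2 = 8*y+1" using assms by (simp add: omg_def)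
  have "tt y * (1 + 2 * tt y) = ((omg y)^2 - 1)/8" unfolding tt_def by (simp add: field_simps power2_eq_square)
  thus ?thesis using h by simp
qed

lemma tt_inv: assumes "\<tau> \<ge> 0" shows "tt (\<tau> * (1 + 2*\<tau>)) = \<tau>"
proof -
  have "8 * (\<tau> * (1 + 2*\<tau>)) + 1 = (4*\<tau>+1)^2" by (simp add: algebra_simps power2_eq_square)
  hence "sqrt (8 * (\<tau> * (1 + 2*\<tau>)) + 1) = 4*\<tau>+1" using assms by simp
  thus ?thesis by (simp add: tt_def omg_def)
qed

lemma cfun_tt: "y > 0 \<Longrightarrow> cfun y = (1 + tt y)^2"
  by (simp add: cfun_def omg_tt power2_eq_square algebra_simps)

lemma dfun_tt: assumes "y > 0" shows "dfun y = (1 + tt y)^2 / (1 + 2 * tt y)"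
proof -
  have "tt y > 0" using tt_pos assms by auto
  thus ?thesis by (simp add: dfun_def omg_tt power2_eq_square field_simps)
qed

lemma sfun_tt: assumes "y > 0" shows "sfun y = (tt y)^2 / (tt y + 2)"
proof -
  have "tt y > 0" using tt_pos assms by auto
  thus ?thesis by (simp add: sfun_def omg_tt power2_eq_square field_simps)
qed

lemma sfun_pos: assumes "y > 0" shows "sfun y > 0"
proof -
  have "tt y > 0" using tt_pos assms by auto
  thus ?thesis using sfun_tt[OF assms] by simp
qed

lemma sfun_m1_pos: "y > 0 \<Longrightarrow> sfun_m1 y > 0"
  using sfun_pos by (simp add: sfun_m1_def)

lemma sfun_sfun_m1: assumes "y > 0" shows "sfun (sfun_m1 y) = y"
proof -
  define t' where "t' = tt (1/y)"
  have t'p: "t' > 0" using tt_pos assms by (simp add: t'_def)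
  have e1: "1/y = t' * (1 + 2*t')" using tt_eq[of "1/y"] assms by (simp add: t'_def)
  have "sfun_m1 y = (t'+2)/t'^2" using sfun_tt[of "1/y"] assms by (simp add: sfun_m1_def t'_def)
  also have "\<dots> = (1/t') * (1 + 2*(1/t'))" using t'p by (simp add: field_simps power2_eq_square)
  finally have "sfun_m1 y = (1/t') * (1 + 2*(1/t'))" .
  hence "tt (sfun_m1 y) = 1/t'" using tt_inv[of "1/t'"] t'p by simp
  hence "sfun (sfun_m1 y) = (1/t')^2 / (1/t' + 2)" using sfun_tt sfun_m1_pos assms by simp
  also have "\<dots> = 1 / (t' * (1 + 2*t'))" using t'p by (simp add: field_simps power2_eq_square)
  also have "\<dots> = y" using e1 assms by (metis divide_divide_eq_right div_by_1 divide_self_if less_irrefl nonzero_divide_eq_eq)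
  finally show ?thesis .
qed

lemma sfun_inj: assumes "y > 0" "z > 0" "sfun y = sfun z" shows "y = z"
proof -
  define T where "T = tt y" define T' where "T' = tt z"
  have p: "T > 0" "T' > 0" using tt_pos assms by (auto simp: T_def T'_def)
  have "T^2/(T+2) = T'^2/(T'+2)" using assms sfun_tt by (simp add: T_def T'_def)
  hence "T^2*(T'+2) = T'^2*(T+2)" using p by (simp add: field_simps)
  hence "(T-T')*(T*T'+2*T+2*T') = 0" by (simp add: algebra_simps power2_eq_square)
  moreover have "T*T'+2*T+2*T' > 0" using p by (simp add: add_pos_pos)
  ultimately have "T = T'" by simp
  thus ?thesis using tt_eq assms by (metis T_def T'_def)
qed



lemma gprod_m1: "gprod h (-1) = 1"
  by (simp add: gprod_def)

lemma gprod_rec: assumes "h k \<noteq> 0" shows "gprod h k = h k * gprod h (k-1)"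
proof (cases "k \<ge> 1")
  case True
  have "{0..k} = insert k {0..k-1}" using True by auto
  thus ?thesis using True by (simp add: gprod_def)
next
  case False
  show ?thesis
  proof (cases "k = 0")
    case True thus ?thesis by (simp add: gprod_def)
  next
    case False
    hence k: "k \<le> -1" using \<open>\<not> k \<ge> 1\<close> by simp
    have "{k-1+1..-1} = insert k {k+1..-1}" using k by auto
    hence "gprod h (k-1) = inverse (h k) * gprod h k" using k by (simp add: gprod_def)
    thus ?thesis using assms by simp
  qed
qed

lemma gprod_pos: assumes "\<And>i. h i > 0" shows "gprod h k > 0"
  using assms by (auto simp: gprod_def intro!: prod_pos)

lemma s_iter_0: "s_iter 0 x = x" by (simp add: s_iter_def)

lemma s_iter_pos: assumes "x > 0" shows "s_iter j x > 0"
proof (cases "j \<ge> 0")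
  case True
  have "\<And>k. (sfun ^^ k) x > 0" proof - fix k show "(sfun ^^ k) x > 0"
    by (induction k) (auto simp: assms sfun_pos) qed
  thus ?thesis using True by (simp add: s_iter_def)
next
  case False
  have "\<And>k. (sfun_m1 ^^ k) x > 0" proof - fix k show "(sfun_m1 ^^ k) x > 0"
    by (induction k) (auto simp: assms sfun_m1_pos) qed
  thus ?thesis using False by (simp add: s_iter_def)
qed

lemma s_iter_step: assumes "x > 0" shows "s_iter (j+1) x = sfun (s_iter j x)"
proof (cases "j \<ge> 0")
  case True
  hence "nat (j+1) = Suc (nat j)" by simp
  thus ?thesis using True by (simp add: s_iter_def)
next
  case False
  show ?thesis
  proof (cases "j = -1")
    case True
    have "sfun (sfun_m1 x) = x" using sfun_sfun_m1 assms by auto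
    thus ?thesis using True by (simp add: s_iter_def)
  next
    case False
    hence j: "j+1 < 0" using \<open>\<not> j \<ge> 0\<close> by simp
    have e: "nat (-j) = Suc (nat (-(j+1)))" using j by simp
    have "(sfun_m1 ^^ nat (-(j+1))) x > 0" using s_iter_pos[OF assms, of "j+1"] j by (simp add: s_iter_def)
    hence "sfun (sfun_m1 ((sfun_m1 ^^ nat (-(j+1))) x)) = (sfun_m1 ^^ nat (-(j+1))) x"
      using sfun_sfun_m1 by blast
    thus ?thesis using j \<open>\<not> j \<ge> 0\<close> e by (simp add: s_iter_def)
  qed
qed



lemma core_fwd:
  fixes p T :: real
  assumes p: "p > 0" and T: "T > 0"
  defines "u \<equiv> p*T*(1+2*T)" and "P \<equiv> p*T*(T+2)" and "U \<equiv> p*T^3"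
  defines "M \<equiv> P + p" and "N \<equiv> U + u"
  defines "a \<equiv> M^2*N/(M+N)^2" and "b \<equiv> M*N^2/(M+N)^2"
  shows "a > 0" "b > 0" "(a+b)*a = a*P - b*p" "(a+b)*b = b*u - a*U"
        "(a+b)^2 = b*M" "(a+b)^2 = a*N"
proof -
  have M: "M = p*(1+T)^2" unfolding M_def P_def by (simp add: algebra_simps power2_eq_square)
  have N: "N = p*T*(1+T)^2" unfolding N_def U_def u_def by (simp add: algebra_simps power2_eq_square power3_eq_cube)
  have S: "M+N = p*(1+T)^3" unfolding M N by (simp add: algebra_simps power2_eq_square power3_eq_cube)
  have q: "(p*(1+T)^3)^2 > 0" using p T by simp
  have "M^2*N = (p*T)*(p*(1+T)^3)^2" unfolding M N by (simp add: algebra_simps power2_eq_square power3_eq_cube)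
  hence a: "a = p*T" unfolding a_def S using q by simp
  have "M*N^2 = (p*T^2)*(p*(1+T)^3)^2" unfolding M N by (simp add: algebra_simps power2_eq_square power3_eq_cube)
  hence b: "b = p*T^2" unfolding b_def S using q by simp
  have ab: "a + b = p*T*(1+T)" unfolding a b by (simp add: algebra_simps power2_eq_square)
  show "a > 0" "b > 0" unfolding a b using p T by simp_all
  show "(a+b)*a = a*P - b*p" unfolding a b P_def using p T
    by (simp add: field_simps power2_eq_square power3_eq_cube)
  show "(a+b)*b = b*u - a*U" unfolding a b u_def U_def using p T
    by (simp add: field_simps power2_eq_square power3_eq_cube)
  show "(a+b)^2 = b*M" unfolding a b M using p T
    by (simp add: field_simps power2_eq_square power3_eq_cube)
  show "(a+b)^2 = a*N" unfolding a b N using p T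
    by (simp add: field_simps power2_eq_square power3_eq_cube)
qed

lemma abmn_fwd:
  fixes p u :: real
  assumes p: "p > 0" and u: "u > 0"
  defines "P \<equiv> p*(cfun (u/p) - 1)" and "U \<equiv> u*(dfun (u/p) - 1)"
  defines "M \<equiv> P + p" and "N \<equiv> U + u"
  defines "a \<equiv> M^2*N/(M+N)^2" and "b \<equiv> M*N^2/(M+N)^2"
  shows "a > 0" "b > 0" "(a+b)*a = a*P - b*p" "(a+b)*b = b*u - a*U"
        "(a+b)^2 = b*M" "(a+b)^2 = a*N"
proof -
  define T where "T = tt (u/p)"
  have r: "u/p > 0" using p u by simp
  have T: "T > 0" using tt_pos[OF r] by (simp add: T_def)
  have ue: "u = p*T*(1+2*T)" using tt_eq[OF r] p by (simp add: T_def field_simps)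
  have Pe: "P = p*T*(T+2)" unfolding P_def cfun_tt[OF r] T_def[symmetric]
    by (simp add: algebra_simps power2_eq_square)
  have "U = u*((1+T)^2/(1+2*T) - 1)" unfolding U_def dfun_tt[OF r] T_def[symmetric] by simp
  also have "\<dots> = u*(T^2/(1+2*T))" using T by (simp add: field_simps power2_eq_square)
  also have "\<dots> = p*T^3*((1+2*T)/(1+2*T))" unfolding ue by (simp add: power2_eq_square power3_eq_cube)
  finally have Ue: "U = p*T^3" using T by simp
  note c = core_fwd[OF p T]
  show "a > 0" "b > 0" "(a+b)*a = a*P - b*p" "(a+b)*b = b*u - a*U"
        "(a+b)^2 = b*M" "(a+b)^2 = a*N"
    unfolding a_def b_def M_def N_def using c by (simp_all only: Pe Ue ue)
qed

lemma abmn_bwd: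
  fixes p u P U a b :: real
  assumes a: "a > 0" and b: "b > 0"
  assumes e1: "(a+b)*a = a*P - b*p" and e2: "(a+b)*b = b*u - a*U"
      and e3: "(a+b)^2 = b*(P+p)" and e4: "(a+b)^2 = a*(U+u)"
  shows "p > 0" "u > 0" "P = p*(cfun (u/p) - 1)" "U = u*(dfun (u/p) - 1)"
        "a = (P+p)^2*(U+u)/((P+p)+(U+u))^2" "b = (P+p)*(U+u)^2/((P+p)+(U+u))^2"
proof -
  define M where "M = P + p" define N where "N = U + u" define S where "S = M + N"
  have ab: "a + b > 0" using a b by simp
  have Mp: "M > 0" using e3 ab b unfolding M_def by (metis zero_less_mult_pos zero_less_power)
  have Np: "N > 0" using e4 ab a unfolding N_def by (metis zero_less_mult_pos zero_less_power)
  have Sp: "S > 0" using Mp Np by (simp add: S_def)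
  have aN: "a*N = b*M" using e3 e4 by (simp add: M_def N_def)
  have ae: "a = b*M/N" using aN Np by (simp add: field_simps)
  have w: "a + b = b*S/N" using ae Np by (simp add: S_def field_simps)
  have "(b*S/N)^2 = b*M" using e3 w by (simp add: M_def)
  hence "b*(b*S^2) = b*(M*N^2)" using Np by (simp add: field_simps power2_eq_square)
  hence bS: "b*S^2 = M*N^2" using b by simp
  have be: "b = M*N^2/S^2" using bS Sp by (simp add: field_simps)
  have ae2: "a = M^2*N/S^2" using ae be Np Mp by (simp add: field_simps power2_eq_square)
  have "a + b = (M*N*S)/S^2" using ae2 be Sp by (simp add: S_def add_divide_distrib[symmetric] algebra_simps power2_eq_square)
  hence abe: "a + b = M*N/S" using Sp by (simp add: power2_eq_square)
  show "a = (P+p)^2*(U+u)/((P+p)+(U+u))^2" "b = (P+p)*(U+u)^2/((P+p)+(U+u))^2"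
    using ae2 be by (simp_all add: M_def N_def S_def)
  have Pm: "P = M - p" by (simp add: M_def)
  have Uu: "U = N - u" by (simp add: N_def)
  have "(M*N/S)*(M^2*N/S^2) = (M^2*N/S^2)*(M-p) - (M*N^2/S^2)*p"
    using e1 abe ae2 be Pm by simp
  moreover have "(M*N/S)*(M^2*N/S^2) = M^3*N^2/S^3" by (simp add: power2_eq_square power3_eq_cube mult_ac)
  moreover have "(M^2*N/S^2)*(M-p) - (M*N^2/S^2)*p = M*N*(M^2 - p*S)/S^2"
    by (simp add: S_def diff_divide_distrib[symmetric] algebra_simps power2_eq_square)
  ultimately have "M^3*N^2/S^3 = M*N*(M^2 - p*S)/S^2" by simp
  hence "(M*N)*(M^2*N) = (M*N)*(S*(M^2 - p*S))" using Sp by (simp add: field_simps power2_eq_square power3_eq_cube)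
  hence "M^2*N = S*(M^2 - p*S)" using Mp Np by simp
  hence "p*S^2 = M^3" by (simp add: S_def algebra_simps power2_eq_square power3_eq_cube)
  hence pe: "p = M^3/S^2" using Sp by (simp add: field_simps)
  have "(M*N/S)*(M*N^2/S^2) = (M*N^2/S^2)*u - (M^2*N/S^2)*(N-u)"
    using e2 abe ae2 be Uu by simp
  moreover have "(M*N/S)*(M*N^2/S^2) = M^2*N^3/S^3" by (simp add: power2_eq_square power3_eq_cube mult_ac)
  moreover have "(M*N^2/S^2)*u - (M^2*N/S^2)*(N-u) = M*N*(u*S - M*N)/S^2"
    by (simp add: S_def diff_divide_distrib[symmetric] algebra_simps power2_eq_square)
  ultimately have "M^2*N^3/S^3 = M*N*(u*S - M*N)/S^2" by simp
  hence "(M*N)*(M*N^2) = (M*N)*(S*(u*S - M*N))" using Sp by (simp add: field_simps power2_eq_square power3_eq_cube)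
  hence "M*N^2 = S*(u*S - M*N)" using Mp Np by simp
  hence "u*S^2 = M*N*(S+N)" by (simp add: algebra_simps power2_eq_square)
  hence ue: "u = M*N*(S+N)/S^2" using Sp by (simp add: field_simps)
  show pp: "p > 0" using pe Mp Sp by simp
  show up: "u > 0" using ue Mp Np Sp by simp
  define t where "t = N/M"
  have tp: "t > 0" using Mp Np by (simp add: t_def)
  have Ne: "N = t*M" using Mp by (simp add: t_def)
  have Se: "S = M*(1+t)" by (simp add: S_def Ne algebra_simps)
  have "p = M^3/(M^2*(1+t)^2)" using pe by (simp add: Se power_mult_distrib)
  also have "\<dots> = M/(1+t)^2" using Mp by (simp add: power2_eq_square power3_eq_cube)
  finally have pe2: "p = M/(1+t)^2" .
  have "u = (M*(t*(1+2*t)))*M^2/(M^2*(1+t)^2)" using ue unfolding Se Ne by (simp add: power_mult_distrib algebra_simps power2_eq_square)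
  also have "\<dots> = M*t*(1+2*t)/(1+t)^2" using Mp by simp
  finally have ue2: "u = M*t*(1+2*t)/(1+t)^2" .
  have q: "(1+t)^2 \<noteq> 0" using tp by simp
  have "u/p = (M*(t*(1+2*t)))/M" unfolding pe2 ue2 using q by (simp add: mult.assoc)
  hence r: "u/p = t*(1+2*t)" using Mp by simp
  have rp: "u/p > 0" using pp up by simp
  have tt: "tt (u/p) = t" using r tt_inv tp by simp
  have cf: "cfun (u/p) = (1+t)^2" using cfun_tt[OF rp] tt by simp
  have df: "dfun (u/p) = (1+t)^2/(1+2*t)" using dfun_tt[OF rp] tt by simp
  have q2: "1 + (t * t + t * 2) \<noteq> 0" "1 + t*2 \<noteq> 0" using tp by (smt (verit) mult_pos_pos)+
  have "P = p*((1+t)^2 - 1)" unfolding Pm pe2 using Mp tp q2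
    by (simp add: field_simps power2_eq_square)
  thus "P = p*(cfun (u/p) - 1)" using cf by simp
  have "U = M*t^3/(1+t)^2" unfolding Uu ue2 Ne using q
    by (simp add: diff_divide_eq_iff power2_eq_square power3_eq_cube algebra_simps)
  also have "\<dots> = (M*t*(1+2*t)/(1+t)^2) * (t^2/(1+2*t))" using q2 by (simp add: power2_eq_square power3_eq_cube)
  also have "t^2/(1+2*t) = (1+t)^2/(1+2*t) - 1" using q2 by (simp add: field_simps power2_eq_square)
  finally have "U = u*((1+t)^2/(1+2*t) - 1)" unfolding ue2 .
  thus "U = u*(dfun (u/p) - 1)" using df by simp
qed



lemma cfun_gt1: assumes "y > 0" shows "cfun y > 1"
proof -
  have "tt y > 0" using tt_pos assms by simp
  hence "1 < (1 + tt y)*(1+tt y)" by (intro less_1_mult) auto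
  thus ?thesis using cfun_tt[OF assms] by (simp add: power2_eq_square)
qed

lemma dfun_gt1: assumes "y > 0" shows "dfun y > 1"
proof -
  have T: "tt y > 0" using tt_pos assms by simp
  have "(1 + tt y)^2 / (1 + 2 * tt y) - 1 = (tt y)^2/(1 + 2*tt y)" using T
    by (simp add: field_simps power2_eq_square)
  moreover have "(tt y)^2/(1 + 2*tt y) > 0" using T by simp
  ultimately show ?thesis using dfun_tt[OF assms] by simp
qed

lemma key_id: assumes "y > 0" shows "y * (dfun y - 1) = sfun y * (cfun y - 1)"
proof -
  define T where "T = tt y"
  have T: "T > 0" using tt_pos assms by (simp add: T_def)
  have y: "y = T*(1+2*T)" using tt_eq assms by (simp add: T_def)
  have e1: "(1+T)^2/(1+2*T) - 1 = T^2/(1+2*T)" using T by (simp add: field_simps power2_eq_square)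
  have e2: "(1+T)^2 - 1 = T*(T+2)" by (simp add: power2_eq_square algebra_simps)
  have "y * (dfun y - 1) = T*(1+2*T) * (T^2/(1+2*T))" unfolding dfun_tt[OF assms] T_def[symmetric] e1 using y by simp
  also have "\<dots> = T^3" using T by (simp add: power2_eq_square power3_eq_cube)
  also have "\<dots> = T^2/(T+2) * (T*(T+2))" using T by (simp add: power2_eq_square power3_eq_cube)
  also have "\<dots> = sfun y * (cfun y - 1)" unfolding sfun_tt[OF assms] cfun_tt[OF assms] T_def[symmetric] e2 by simp
  finally show ?thesis .
qed

definition Gc :: "real \<Rightarrow> int \<Rightarrow> real" where "Gc x k = gprod (\<lambda>i. c_j i x - 1) k"
definition Gd :: "real \<Rightarrow> int \<Rightarrow> real" where "Gd x k = gprod (\<lambda>i. d_j i x - 1) k"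

lemma hc_pos: "x > 0 \<Longrightarrow> c_j i x - 1 > 0"
  using cfun_gt1[OF s_iter_pos[of x i]] by (simp add: c_j_def)
lemma hd_pos: "x > 0 \<Longrightarrow> d_j i x - 1 > 0"
  using dfun_gt1[OF s_iter_pos[of x i]] by (simp add: d_j_def)

lemma Gc_pos: "x > 0 \<Longrightarrow> Gc x k > 0"
  using hc_pos unfolding Gc_def by (intro gprod_pos) blast
lemma Gd_pos: "x > 0 \<Longrightarrow> Gd x k > 0"
  using hd_pos unfolding Gd_def by (intro gprod_pos) blast
lemma Gc_rec: "x > 0 \<Longrightarrow> Gc x k = (c_j k x - 1) * Gc x (k-1)"
  unfolding Gc_def using hc_pos by (intro gprod_rec) (metis less_irrefl)
lemma Gd_rec: "x > 0 \<Longrightarrow> Gd x k = (d_j k x - 1) * Gd x (k-1)"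
  unfolding Gd_def using hd_pos by (intro gprod_rec) (metis less_irrefl)
lemma Gc_m1: "Gc x (-1) = 1" by (simp add: Gc_def gprod_m1)
lemma Gd_m1: "Gd x (-1) = 1" by (simp add: Gd_def gprod_m1)

lemma ratio: assumes x: "x > 0" shows "x * Gd x k = s_iter (k+1) x * Gc x k"
proof (induction k rule: int_induct[where k="-1"])
  case base thus ?case by (simp add: Gc_m1 Gd_m1 s_iter_0)
next
  case (step1 k)
  define q where "q = s_iter (k+1) x"
  have q: "q > 0" using s_iter_pos x by (simp add: q_def)
  have "x * Gd x (k+1) = (q * (dfun q - 1)) * Gc x k"
    using Gd_rec[OF x, of "k+1"] step1(2) by (simp add: d_j_def q_def mult_ac)
  also have "\<dots> = (sfun q * (cfun q - 1)) * Gc x k" using key_id[OF q] by simp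
  also have "\<dots> = s_iter (k+1+1) x * Gc x (k+1)"
    using Gc_rec[OF x, of "k+1"] s_iter_step[OF x, of "k+1"] by (simp add: c_j_def q_def)
  finally show ?case .
next
  case (step2 k)
  define q where "q = s_iter k x"
  have q: "q > 0" using s_iter_pos x by (simp add: q_def)
  have dq: "dfun q - 1 > 0" using dfun_gt1[OF q] by simp
  have "(dfun q - 1) * (x * Gd x (k-1)) = x * Gd x k"
    using Gd_rec[OF x, of k] by (simp add: d_j_def q_def)
  also have "\<dots> = sfun q * (cfun q - 1) * Gc x (k-1)"
    using step2(2) Gc_rec[OF x, of k] s_iter_step[OF x, of k] by (simp add: c_j_def q_def)
  also have "\<dots> = (q * (dfun q - 1)) * Gc x (k-1)" using key_id[OF q] by simp
  also have "\<dots> = (dfun q - 1) * (q * Gc x (k-1))" by (simp add: mult_ac)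
  finally have "x * Gd x (k-1) = q * Gc x (k-1)" using dq by simp
  thus ?case by (simp add: q_def)
qed

lemma mono_int: fixes f :: "int \<Rightarrow> real" assumes "\<And>k. f k \<le> f (k+1)" shows "mono f"
proof (rule monoI)
  fix i j :: int assume "i \<le> j"
  thus "f i \<le> f j"
  proof (induction j rule: int_ge_induct)
    case base thus ?case by simp
  next
    case (step j) thus ?case using assms[of j] by simp
  qed
qed

lemma antimono_int: fixes f :: "int \<Rightarrow> real" assumes "\<And>k. f (k+1) \<le> f k" shows "antimono f"
proof (rule antimonoI)
  fix i j :: int assume "i \<le> j"
  thus "f j \<le> f i"
  proof (induction j rule: int_ge_induct)
    case base thus ?case by simp
  next
    case (step j) thus ?case using assms[of j] by simp
  qed
qed

lemma m_eq_iff: fixes a b mi m1 m0 :: real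
  shows "(a+b)*(mi + a) = a*m1 + b*m0 \<longleftrightarrow> (a+b)*a = a*(m1-mi) - b*(mi-m0)"
proof -
  have "(a+b)*(mi + a) - (a*m1 + b*m0) = (a+b)*a - (a*(m1-mi) - b*(mi-m0))" by (simp add: algebra_simps)
  thus ?thesis by (metis eq_iff_diff_eq_0)
qed

lemma n_eq_iff: fixes a b ni n1 n0 :: real
  shows "(a+b)*(ni + b) = a*n1 + b*n0 \<longleftrightarrow> (a+b)*b = b*(n0-ni) - a*(ni-n1)"
proof -
  have "(a+b)*(ni + b) - (a*n1 + b*n0) = (a+b)*b - (b*(n0-ni) - a*(ni-n1))" by (simp add: algebra_simps)
  thus ?thesis by (metis eq_iff_diff_eq_0)
qed



lemma isdef_unfold:
  assumes "is_def_solution x a b m n"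
  shows "mono m" "(m \<longlongrightarrow> 0) at_bot" "\<And>k. m (k+1) - m k = Gc x k"
        "antimono n" "(n \<longlongrightarrow> 0) at_top" "\<And>k. n k - n (k+1) = x * Gd x k"
        "\<And>i. a i = (m (i+1) - m (i-1))^2 * (n (i-1) - n (i+1))
                 / ((m (i+1) - m (i-1)) + (n (i-1) - n (i+1)))^2"
        "\<And>i. b i = (m (i+1) - m (i-1)) * (n (i-1) - n (i+1))^2
                 / ((m (i+1) - m (i-1)) + (n (i-1) - n (i+1)))^2"
  using assms unfolding is_def_solution_def Gc_def Gd_def by blast+

lemma def_to_abmn:
  assumes x: "x > 0" and H: "is_def_solution x a b m n"
  shows "ABMN_default a b m n \<and> (n (-1) - n 0) / (m 0 - m (-1)) = x"
proof -
  note h = isdef_unfold[OF H]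
  have loc: "a i > 0 \<and> b i > 0 \<and>
     (a i + b i) * (m i + a i) = a i * m (i+1) + b i * m (i-1) \<and>
     (a i + b i) * (n i + b i) = a i * n (i+1) + b i * n (i-1) \<and>
     (a i + b i)^2 = b i * (m (i+1) - m (i-1)) \<and>
     (a i + b i)^2 = a i * (n (i-1) - n (i+1))" for i
  proof -
    define p where "p = m i - m (i-1)"
    define u where "u = n (i-1) - n i"
    define P where "P = m (i+1) - m i"
    define U where "U = n i - n (i+1)"
    have pe: "p = Gc x (i-1)" using h(3)[of "i-1"] by (simp add: p_def)
    have ue: "u = x * Gd x (i-1)" using h(6)[of "i-1"] by (simp add: u_def)
    have pp: "p > 0" using pe Gc_pos x by simp
    have up: "u > 0" using ue Gd_pos x by simp
    have r: "u/p = s_iter i x" using ratio[OF x, of "i-1"] pe ue pp by (simp add: field_simps)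
    have Pe: "P = p*(cfun (u/p) - 1)" using h(3)[of i] Gc_rec[OF x, of i] pe r
      by (simp add: P_def c_j_def mult_ac)
    have Ue: "U = u*(dfun (u/p) - 1)" using h(6)[of i] Gd_rec[OF x, of i] ue r
      by (simp add: U_def d_j_def mult_ac)
    note f = abmn_fwd[OF pp up]
    have M: "m (i+1) - m (i-1) = P + p" by (simp add: P_def p_def)
    have N: "n (i-1) - n (i+1) = U + u" by (simp add: U_def u_def)
    have ai: "a i = (P+p)^2*(U+u)/((P+p)+(U+u))^2" using h(7)[of i] M N by simp
    have bi: "b i = (P+p)*(U+u)^2/((P+p)+(U+u))^2" using h(8)[of i] M N by simp
    note g = f[folded Pe Ue, folded ai bi]
    show ?thesis
      unfolding m_eq_iff n_eq_iff M N
      using g by (simp add: P_def p_def U_def u_def)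
  qed
  have m1: "m 0 - m (-1) = 1" using h(3)[of "-1"] Gc_m1 by simp
  have n1: "n (-1) - n 0 = x" using h(6)[of "-1"] Gd_m1 by simp
  have sol: "ABMN_solution a b m n" unfolding ABMN_solution_def using loc less_imp_le by blast
  have pos: "\<forall>i. a i > 0 \<and> b i > 0" using loc by blast
  show ?thesis
    unfolding ABMN_default_def ABMN_positive_def
    using sol pos h(2) h(5) m1 n1 by simp
qed



lemma abmn_to_def:
  assumes x: "x > 0" and D: "ABMN_default a b m n"
      and R: "(n (-1) - n 0) / (m 0 - m (-1)) = x"
  shows "is_def_solution x a b m n"
proof -
  have S: "\<And>i. a i > 0 \<and> b i > 0 \<and>
     (a i + b i) * (m i + a i) = a i * m (i+1) + b i * m (i-1) \<and>
     (a i + b i) * (n i + b i) = a i * n (i+1) + b i * n (i-1) \<and>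
     (a i + b i)^2 = b i * (m (i+1) - m (i-1)) \<and>
     (a i + b i)^2 = a i * (n (i-1) - n (i+1))"
    using D unfolding ABMN_default_def ABMN_positive_def ABMN_solution_def by blast
  have lim: "(m \<longlongrightarrow> 0) at_bot" "(n \<longlongrightarrow> 0) at_top" "m 0 - m (-1) = 1"
    using D unfolding ABMN_default_def by auto
  define pd where "pd k = m (k+1) - m k" for k
  define ud where "ud k = n k - n (k+1)" for k
  have B: "pd (i-1) > 0 \<and> ud (i-1) > 0 \<and>
     pd i = pd (i-1) * (cfun (ud (i-1) / pd (i-1)) - 1) \<and>
     ud i = ud (i-1) * (dfun (ud (i-1) / pd (i-1)) - 1) \<and>
     a i = (m (i+1) - m (i-1))^2 * (n (i-1) - n (i+1))
                 / ((m (i+1) - m (i-1)) + (n (i-1) - n (i+1)))^2 \<and>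
     b i = (m (i+1) - m (i-1)) * (n (i-1) - n (i+1))^2
                 / ((m (i+1) - m (i-1)) + (n (i-1) - n (i+1)))^2" for i
  proof -
    have Si: "a i > 0" "b i > 0"
      "(a i + b i) * a i = a i * pd i - b i * pd (i-1)"
      "(a i + b i) * b i = b i * ud (i-1) - a i * ud i"
      "(a i + b i)^2 = b i * (pd i + pd (i-1))"
      "(a i + b i)^2 = a i * (ud i + ud (i-1))"
      using S[of i] unfolding m_eq_iff n_eq_iff by (simp_all add: pd_def ud_def)
    note r = abmn_bwd[OF Si]
    have M: "pd i + pd (i-1) = m (i+1) - m (i-1)" by (simp add: pd_def)
    have N: "ud i + ud (i-1) = n (i-1) - n (i+1)" by (simp add: ud_def)
    show ?thesis using r unfolding M N by simp
  qed
  have Q: "pd k = Gc x k \<and> ud k = x * Gd x k" for k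
  proof (induction k rule: int_induct[where k="-1"])
    case base
    have "ud (-1) = x" using R lim(3) by (simp add: ud_def)
    thus ?case using lim(3) by (simp add: pd_def Gc_m1 Gd_m1)
  next
    case (step1 k)
    have rr: "ud k / pd k = s_iter (k+1) x" using step1(2) ratio[OF x, of k] Gc_pos[OF x, of k]
      by (simp add: field_simps)
    have "pd (k+1) = Gc x (k+1)" using B[of "k+1"] rr step1(2) Gc_rec[OF x, of "k+1"]
      by (simp add: c_j_def mult_ac)
    moreover have "ud (k+1) = x * Gd x (k+1)" using B[of "k+1"] rr step1(2) Gd_rec[OF x, of "k+1"]
      by (simp add: d_j_def mult_ac)
    ultimately show ?case ..
  next
    case (step2 k)
    define p where "p = pd (k-1)" define u where "u = ud (k-1)"
    have pp: "p > 0" and up: "u > 0" using B[of k] by (simp_all add: p_def u_def)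
    have rp: "u/p > 0" using pp up by simp
    have Pk: "pd k = p * (cfun (u/p) - 1)" and Uk: "ud k = u * (dfun (u/p) - 1)"
      using B[of k] by (simp_all add: p_def u_def)
    have cpos: "cfun (u/p) - 1 > 0" using cfun_gt1[OF rp] by simp
    define r where "r = u/p"
    define C where "C = cfun r - 1" define Dd where "Dd = dfun r - 1"
    have kid: "r * Dd = sfun r * C" using key_id[OF rp] by (simp add: r_def C_def Dd_def)
    have ur: "u = r * p" using pp by (simp add: r_def)
    have Cp: "C > 0" using cpos by (simp add: C_def r_def)
    have "ud k / pd k = (u * Dd) / (p * C)" unfolding Pk Uk by (simp add: C_def Dd_def r_def)
    also have "u * Dd = p * (sfun r * C)" unfolding ur using kid by (simp add: mult_ac)
    also have "p * (sfun r * C) / (p * C) = sfun r" using pp Cp by simp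
    finally have e1: "ud k / pd k = sfun (u/p)" by (simp add: r_def)
    have "ud k / pd k = s_iter (k+1) x" using step2(2) ratio[OF x, of k] Gc_pos[OF x, of k]
      by (simp add: field_simps)
    also have "\<dots> = sfun (s_iter k x)" using s_iter_step[OF x, of k] by simp
    finally have "sfun (u/p) = sfun (s_iter k x)" using e1 by simp
    hence rr: "u/p = s_iter k x" using sfun_inj rp s_iter_pos[OF x] by blast
    have hc: "c_j k x - 1 > 0" "d_j k x - 1 > 0" using hc_pos hd_pos x by auto
    have "p * (c_j k x - 1) = Gc x (k-1) * (c_j k x - 1)"
      using Pk rr step2(2) Gc_rec[OF x, of k] by (simp add: c_j_def mult_ac) (metis)
    hence "p = Gc x (k-1)" using hc by simp
    moreover have "u * (d_j k x - 1) = (x * Gd x (k-1)) * (d_j k x - 1)"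
      using Uk rr step2(2) Gd_rec[OF x, of k] by (simp add: d_j_def mult_ac) (metis)
    hence "u = x * Gd x (k-1)" using hc by simp
    ultimately show ?case by (simp add: p_def u_def)
  qed
  have mono: "mono m" using Q Gc_pos[OF x] by (intro mono_int) (smt (verit) pd_def)
  have amono: "antimono n" using Q Gd_pos[OF x] x by (intro antimono_int) (smt (verit) ud_def mult_pos_pos)
  show ?thesis unfolding is_def_solution_def Gc_def[symmetric] Gd_def[symmetric]
    using mono amono lim B Q unfolding pd_def ud_def by blast
qed



lemma sfun_le: assumes "y > 0" shows "sfun y \<le> y/5"
proof -
  define T where "T = tt y"
  have T: "T > 0" using tt_pos assms by (simp add: T_def)
  have y: "y = T*(1+2*T)" using tt_eq assms by (simp add: T_def)
  have "T^2/(T+2) \<le> T*(1+2*T)/5" using T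
    by (simp add: field_simps power2_eq_square)
  thus ?thesis unfolding sfun_tt[OF assms] T_def[symmetric] using y by simp
qed

lemma dfun_le: assumes "y > 0" shows "dfun y - 1 \<le> y/2"
proof -
  define T where "T = tt y"
  have T: "T > 0" using tt_pos assms by (simp add: T_def)
  have y: "y = T*(1+2*T)" using tt_eq assms by (simp add: T_def)
  have "(1+T)^2/(1+2*T) - 1 \<le> T*(1+2*T)/2" using T
    by (simp add: field_simps power2_eq_square)
  thus ?thesis unfolding dfun_tt[OF assms] T_def[symmetric] using y by simp
qed

lemma cfun_ge: assumes "y > 0" shows "cfun y - 1 \<ge> y/2"
proof -
  define T where "T = tt y"
  have T: "T > 0" using tt_pos assms by (simp add: T_def)
  have y: "y = T*(1+2*T)" using tt_eq assms by (simp add: T_def)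
  have "(1+T)^2 - 1 \<ge> T*(1+2*T)/2" using T
    by (simp add: field_simps power2_eq_square)
  thus ?thesis unfolding cfun_tt[OF assms] T_def[symmetric] using y by simp
qed

lemma s_iter_small: assumes x: "x > 0" shows "s_iter (int k) x \<le> x / 5^k"
proof (induction k)
  case 0 thus ?case by (simp add: s_iter_0)
next
  case (Suc k)
  have "s_iter (int (Suc k)) x = sfun (s_iter (int k) x)" using s_iter_step[OF x, of "int k"] by (simp add: add.commute)
  also have "\<dots> \<le> s_iter (int k) x / 5" using sfun_le s_iter_pos x by blast
  also have "\<dots> \<le> (x/5^k)/5" using Suc by simp
  finally show ?case by (simp add: field_simps)
qed

lemma s_iter_big: assumes x: "x > 0" shows "s_iter (- int k) x \<ge> 5^k * x"
proof (induction k)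
  case 0 thus ?case by (simp add: s_iter_0)
next
  case (Suc k)
  have "s_iter (- int k) x = sfun (s_iter (- int (Suc k)) x)" using s_iter_step[OF x, of "- int (Suc k)"] by simp
  also have "\<dots> \<le> s_iter (- int (Suc k)) x / 5" using sfun_le s_iter_pos x by blast
  finally show ?case using Suc by simp
qed

lemma summ_c: assumes x: "x > 0" shows "summable (\<lambda>n. Gc x (-1 - int n))"
proof -
  obtain N where N: "6/x < 5^N" using real_arch_pow[of 5 "6/x"] by auto
  show ?thesis
  proof (rule summable_ratio_test[where c="1/2" and N=N])
    fix n assume n: "n \<ge> N"
    define k where "k = -1 - int n"
    have k: "k = - int (Suc n)" by (simp add: k_def)
    have "(5::real)^N \<le> 5^(Suc n)" using n by (intro power_increasing) auto
    hence "x * 5^N \<le> x * 5^(Suc n)" using x by (intro mult_left_mono) auto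
    moreover have "6 < x * 5^N" using N x by (simp add: field_simps)
    ultimately have "6 \<le> 5^(Suc n) * x" by (simp add: mult.commute)
    also have "\<dots> \<le> s_iter k x" using s_iter_big[OF x, of "Suc n"] unfolding k by simp
    finally have "c_j k x - 1 \<ge> 3" using cfun_ge[OF s_iter_pos[OF x, of k]] by (simp add: c_j_def)
    moreover have "Gc x k = (c_j k x - 1) * Gc x (k-1)" using Gc_rec[OF x] .
    moreover have "Gc x (k-1) > 0" using Gc_pos[OF x] .
    ultimately have "3 * Gc x (k-1) \<le> Gc x k" using mult_right_mono[of 3 "c_j k x - 1" "Gc x (k-1)"] by simp
    hence "Gc x (k-1) \<le> 1/2 * Gc x k" using Gc_pos[OF x, of "k-1"] by simp
    moreover have "k - 1 = -1 - int (Suc n)" by (simp add: k_def)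
    ultimately show "norm (Gc x (-1 - int (Suc n))) \<le> 1/2 * norm (Gc x (-1 - int n))"
      using Gc_pos[OF x, of "-2 - int n"] Gc_pos[OF x, of "-1 - int n"] by (simp add: k_def)
  qed simp
qed

lemma summ_d: assumes x: "x > 0" shows "summable (\<lambda>n. x * Gd x (int n))"
proof -
  obtain N where N: "x < 5^N" using real_arch_pow[of 5 x] by auto
  show ?thesis
  proof (rule summable_ratio_test[where c="1/2" and N=N])
    fix n assume n: "n \<ge> N"
    define k where "k = int (Suc n)"
    have "(5::real)^N \<le> 5^(Suc n)" using n by (intro power_increasing) auto
    hence "x / 5^(Suc n) \<le> 1" using N by (simp add: field_simps)
    hence "s_iter k x \<le> 1" using s_iter_small[OF x, of "Suc n"] unfolding k_def by linarith
    hence "d_j k x - 1 \<le> 1/2" using dfun_le[OF s_iter_pos[OF x, of k]] by (simp add: d_j_def)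
    moreover have "Gd x k = (d_j k x - 1) * Gd x (k-1)" using Gd_rec[OF x] .
    moreover have "Gd x (k-1) > 0" using Gd_pos[OF x] .
    ultimately have "Gd x k \<le> 1/2 * Gd x (k-1)" by (simp add: mult_right_mono)
    moreover have "k - 1 = int n" by (simp add: k_def)
    ultimately show "norm (x * Gd x (int (Suc n))) \<le> 1/2 * norm (x * Gd x (int n))"
      using Gd_pos[OF x, of "int n"] Gd_pos[OF x, of "1 + int n"] x by (simp add: k_def abs_mult)
  qed simp
qed



lemma summable_back:
  fixes h :: "int \<Rightarrow> real"
  assumes "summable (\<lambda>n. h (-1 - int n))"
  shows "summable (\<lambda>n::nat. h (k - int n))"
proof (cases "k \<ge> -1")
  case True
  define K where "K = nat (k+1)"
  have "(\<lambda>n. h (k - int (n + K))) = (\<lambda>n. h (-1 - int n))" using True by (auto simp: K_def algebra_simps)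
  hence "summable (\<lambda>n. (\<lambda>n. h (k - int n)) (n + K))" using assms by simp
  thus ?thesis by (subst (asm) summable_iff_shift)
next
  case False
  define K where "K = nat (-1-k)"
  have "(\<lambda>n. h (k - int n)) = (\<lambda>n. h (-1 - int (n + K)))" using False by (auto simp: K_def algebra_simps)
  moreover have "summable (\<lambda>n. h (-1 - int (n + K)))" using summable_iff_shift[of "\<lambda>n. h (-1 - int n)" K] assms by simp
  ultimately show ?thesis by simp
qed

lemma summable_fwd:
  fixes h :: "int \<Rightarrow> real"
  assumes "summable (\<lambda>n. h (int n))"
  shows "summable (\<lambda>n::nat. h (k + int n))"
proof (cases "k \<ge> 0")
  case True
  define K where "K = nat k"
  have "(\<lambda>n. h (k + int n)) = (\<lambda>n. h (int (n + K)))" using True by (auto simp: K_def algebra_simps)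
  moreover have "summable (\<lambda>n. h (int (n + K)))" using summable_iff_shift[of "\<lambda>n. h (int n)" K] assms by simp
  ultimately show ?thesis by simp
next
  case False
  define K where "K = nat (-k)"
  have "(\<lambda>n. h (k + int (n + K))) = (\<lambda>n. h (int n))" using False by (auto simp: K_def algebra_simps)
  hence "summable (\<lambda>n. (\<lambda>n. h (k + int n)) (n + K))" using assms by simp
  thus ?thesis by (subst (asm) summable_iff_shift)
qed

lemma existence: assumes x: "x > 0" shows "\<exists>a b m n. is_def_solution x a b m n"
proof -
  define m where "m k = (\<Sum>n. Gc x (k - 1 - int n))" for k
  define nn where "nn k = (\<Sum>n. x * Gd x (k + int n))" for k
  define a where "a i = (m (i+1) - m (i-1))^2 * (nn (i-1) - nn (i+1))
                 / ((m (i+1) - m (i-1)) + (nn (i-1) - nn (i+1)))^2" for i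
  define b where "b i = (m (i+1) - m (i-1)) * (nn (i-1) - nn (i+1))^2
                 / ((m (i+1) - m (i-1)) + (nn (i-1) - nn (i+1)))^2" for i
  have sc: "summable (\<lambda>n. Gc x (-1 - int n))" using summ_c[OF x] .
  have sd: "summable (\<lambda>n. x * Gd x (int n))" using summ_d[OF x] .
  have dm: "m (k+1) - m k = Gc x k" for k
  proof -
    have s: "summable (\<lambda>n. Gc x (k - int n))" using summable_back[OF sc] .
    have "(\<Sum>n. Gc x (k - int (Suc n))) = (\<Sum>n. Gc x (k - int n)) - Gc x (k - int 0)"
      using suminf_split_head[OF s] by simp
    moreover have "(\<lambda>n. Gc x (k - int (Suc n))) = (\<lambda>n. Gc x (k - 1 - int n))" by (auto simp: algebra_simps)
    ultimately show ?thesis by (simp add: m_def)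
  qed
  have dn: "nn k - nn (k+1) = x * Gd x k" for k
  proof -
    have s: "summable (\<lambda>n. x * Gd x (k + int n))" using summable_fwd[OF sd] .
    have "(\<Sum>n. x * Gd x (k + int (Suc n))) = (\<Sum>n. x * Gd x (k + int n)) - x * Gd x (k + int 0)"
      using suminf_split_head[OF s] by simp
    moreover have "(\<lambda>n. x * Gd x (k + int (Suc n))) = (\<lambda>n. x * Gd x (k + 1 + int n))" by (auto simp: add.assoc)
    ultimately show ?thesis by (simp add: nn_def)
  qed
  have limm: "(m \<longlongrightarrow> 0) at_bot"
    unfolding tendsto_iff
  proof (intro allI impI)
    fix e :: real assume e: "e > 0"
    obtain N where N: "\<And>n. n \<ge> N \<Longrightarrow> norm (\<Sum>i. Gc x (-1 - int (i + n))) < e"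
      using suminf_exist_split[OF e sc] by auto
    show "\<forall>\<^sub>F k in at_bot. dist (m k) 0 < e"
      unfolding eventually_at_bot_linorder
    proof (intro exI[of _ "- int N"] allI impI)
      fix k :: int assume k: "k \<le> - int N"
      have "(\<lambda>i. Gc x (k - 1 - int i)) = (\<lambda>i. Gc x (-1 - int (i + nat (-k))))" using k by (auto simp: algebra_simps)
      hence mk: "m k = (\<Sum>i. Gc x (-1 - int (i + nat (-k))))" by (simp add: m_def)
      have "nat (-k) \<ge> N" using k by simp
      hence nn: "norm (\<Sum>i. Gc x (-1 - int (i + nat (-k)))) < e" by (rule N)
      show "dist (m k) 0 < e" using nn by (simp only: mk dist_real_def diff_zero real_norm_def)
    qed
  qed
  have limn: "(nn \<longlongrightarrow> 0) at_top"
    unfolding tendsto_iff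
  proof (intro allI impI)
    fix e :: real assume e: "e > 0"
    obtain N where N: "\<And>n. n \<ge> N \<Longrightarrow> norm (\<Sum>i. x * Gd x (int (i + n))) < e"
      using suminf_exist_split[OF e sd] by auto
    show "\<forall>\<^sub>F k in at_top. dist (nn k) 0 < e"
      unfolding eventually_at_top_linorder
    proof (intro exI[of _ "int N"] allI impI)
      fix k :: int assume k: "k \<ge> int N"
      have "(\<lambda>i. x * Gd x (k + int i)) = (\<lambda>i. x * Gd x (int (i + nat k)))" using k by (auto simp: algebra_simps)
      hence mk: "nn k = (\<Sum>i. x * Gd x (int (i + nat k)))" by (simp add: nn_def)
      have "nat k \<ge> N" using k by simp
      hence nn: "norm (\<Sum>i. x * Gd x (int (i + nat k))) < e" by (rule N)
      show "dist (nn k) 0 < e" using nn by (simp only: mk dist_real_def diff_zero real_norm_def)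
    qed
  qed
  have mono: "mono m" using dm Gc_pos[OF x] by (intro mono_int) (smt (verit))
  have amono: "antimono nn" using dn Gd_pos[OF x] x by (intro antimono_int) (smt (verit) mult_pos_pos)
  have "is_def_solution x a b m nn"
    unfolding is_def_solution_def Gc_def[symmetric] Gd_def[symmetric]
    using mono amono limm limn dm dn by (simp add: a_def b_def)
  thus ?thesis by blast
qed

lemma isdef_unique:
  assumes "is_def_solution x a b m n" "is_def_solution x a' b' m' n'"
  shows "a = a' \<and> b = b' \<and> m = m' \<and> n = n'"
proof -
  note h = isdef_unfold[OF assms(1)] and h' = isdef_unfold[OF assms(2)]
  have cm: "m k - m' k = m 0 - m' 0" for k
  proof (induction k rule: int_induct[where k=0])
    case base show ?case by simp
  next
    case (step1 i) thus ?case using h(3)[of i] h'(3)[of i] by simp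
  next
    case (step2 i) thus ?case using h(3)[of "i-1"] h'(3)[of "i-1"] by simp
  qed
  have cn: "n k - n' k = n 0 - n' 0" for k
  proof (induction k rule: int_induct[where k=0])
    case base show ?case by simp
  next
    case (step1 i) thus ?case using h(6)[of i] h'(6)[of i] by simp
  next
    case (step2 i) thus ?case using h(6)[of "i-1"] h'(6)[of "i-1"] by simp
  qed
  have "((\<lambda>k. m k - m' k) \<longlongrightarrow> 0 - 0) at_bot" using h(2) h'(2) by (intro tendsto_diff)
  moreover have "(\<lambda>k. m k - m' k) = (\<lambda>k. m 0 - m' 0)" using cm by auto
  ultimately have "m 0 - m' 0 = 0" by (simp add: tendsto_const_iff)
  hence mm: "m = m'" using cm by (auto intro!: ext)
  have "((\<lambda>k. n k - n' k) \<longlongrightarrow> 0 - 0) at_top" using h(5) h'(5) by (intro tendsto_diff)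
  moreover have "(\<lambda>k. n k - n' k) = (\<lambda>k. n 0 - n' 0)" using cn by auto
  ultimately have "n 0 - n' 0 = 0" by (simp add: tendsto_const_iff)
  hence nn: "n = n'" using cn by (auto intro!: ext)
  have "a = a'" using h(7) h'(7) mm nn by (auto intro!: ext)
  moreover have "b = b'" using h(8) h'(8) mm nn by (auto intro!: ext)
  ultimately show ?thesis using mm nn by simp
qed

theorem mainTheorem10:
  fixes x :: real
  assumes "x > 0"
  shows "(\<exists>!(a, b, m, n). ABMN_default a b m n \<and> (n (-1) - n 0) / (m 0 - m (-1)) = x)
    \<and> (\<exists>a b m n. is_def_solution x a b m n)
    \<and> (\<forall>a b m n. (ABMN_default a b m n \<and> (n (-1) - n 0) / (m 0 - m (-1)) = x)
                  \<longleftrightarrow> is_def_solution x a b m n)"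
proof -
  have iff: "\<forall>a b m n. (ABMN_default a b m n \<and> (n (-1) - n 0) / (m 0 - m (-1)) = x)
                  \<longleftrightarrow> is_def_solution x a b m n"
    using def_to_abmn abmn_to_def assms by blast
  obtain a b m n where E: "is_def_solution x a b m n" using existence[OF assms] by blast
  have ex1: "\<exists>!(a, b, m, n). ABMN_default a b m n \<and> (n (-1) - n 0) / (m 0 - m (-1)) = x"
  proof (rule ex1I[of _ "(a,b,m,n)"])
    show "case (a, b, m, n) of (a, b, m, n) \<Rightarrow> ABMN_default a b m n \<and> (n (-1) - n 0) / (m 0 - m (-1)) = x"
      using iff E by simp
  next
    fix z assume "case z of (a, b, m, n) \<Rightarrow> ABMN_default a b m n \<and> (n (-1) - n 0) / (m 0 - m (-1)) = x"
    moreover obtain a' b' m' n' where z: "z = (a', b', m', n')" by (cases z) auto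
    ultimately have "is_def_solution x a' b' m' n'" using iff by simp
    thus "z = (a, b, m, n)" using isdef_unique[OF _ E] z by blast
  qed
  show ?thesis using ex1 E iff by blast
qed


end
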